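(* Let $c\in\{0,1\}^n$ and let $S_c$ be the set of all points of $\{0,1\}^n$ at Hamming distance exactly $1$ from $c$. Let $A\subseteq S_c$ with $|A|=\ell\ge 3$, and let $c_A=\frac{1}{|A|}\sum_{x\in A}x\in\mathbb R^n$ be its centroid. Then (a) $d(c_A,a)<1$ for every $a\in A$, and (b) $d(c_A,a)\ge 1$ for every $a\in\{0,1\}^n\setminus(A\cup\{c\})$, where $d$ is the Euclidean distance. *)

theory Defs
  imports "HOL-Analysis.Analysis"
begin

definition cube :: "(real ^ 'n) set" where
  "cube = {x. \<forall>i. x $ i = 0 \<or> x $ i = 1}"

definition hamming :: "real ^ 'n \<Rightarrow> real ^ 'n \<Rightarrow> nat" where
  "hamming x y = card {i. x $ i \<noteq> y $ i}"

definition sphere1 :: "real ^ 'n \<Rightarrow> (real ^ 'n) set" where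
  "sphere1 c = {x \<in> cube. hamming x c = 1}"

definition centroid :: "(real ^ 'n) set \<Rightarrow> real ^ 'n" where
  "centroid A = (1 / real (card A)) *\<^sub>R (\<Sum>x\<in>A. x)"

end

theory Submission
  imports Defs
begin

lemma dist_sq_vec: "(dist (x::real^'n) y)^2 = (\<Sum>i\<in>UNIV. (x$i - y$i)^2)"
proof -
  have "(dist x y)^2 = (x - y) \<bullet> (x - y)" by (simp add: dist_norm power2_norm_eq_inner)
  also have "\<dots> = (\<Sum>i\<in>UNIV. (x$i - y$i)^2)" by (simp add: inner_vec_def power2_eq_square)
  finally show ?thesis .
qed

theorem lemma4:
  fixes c :: "real ^ 'n" and A :: "(real ^ 'n) set"
  assumes "c \<in> cube"
    and "A \<subseteq> sphere1 c"
    and "card A \<ge> 3"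
  shows "(\<forall>a\<in>A. dist (centroid A) a < 1)
       \<and> (\<forall>a\<in>cube - (A \<union> {c}). dist (centroid A) a \<ge> 1)"
proof -
  have finA: "finite A" using assms(3) card.infinite by fastforce
  define l where "l = real (card A)"
  have l3: "l \<ge> 3" using assms(3) unfolding l_def by simp
  define D where "D x = {i. x$i \<noteq> c$i}" for x :: "real^'n"
  define s where "s i = 1 - 2 * c$i" for i
  define m where "m i = card {x\<in>A. i \<in> D x}" for i
  have cc: "c$i = 0 \<or> c$i = 1" for i using assms(1) unfolding cube_def by auto
  have s2: "(s i)^2 = 1" for i using cc[of i] unfolding s_def by auto
  have F1: "x$i - c$i = (if i \<in> D x then s i else 0)" if "x \<in> cube" for x i
    using that cc[of i] unfolding cube_def D_def s_def by auto
  have Dx1: "card (D x) = 1" if "x \<in> A" for x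
    using that assms(2) unfolding sphere1_def hamming_def D_def by auto
  have Acube: "x \<in> cube" if "x \<in> A" for x using that assms(2) unfolding sphere1_def by auto
  have Deq: "x = y" if "x \<in> cube" "y \<in> cube" "D x = D y" for x y
  proof -
    have "x$i = y$i" for i using F1[OF that(1), of i] F1[OF that(2), of i] that(3) by auto
    then show ?thesis by (simp add: vec_eq_iff)
  qed
  have single: "D x = {i}" if "card (D x) = 1" "i \<in> D x" for x i
    using that by (metis card_1_singletonE singletonD)
  have m1: "m i \<le> 1" for i
  proof -
    have "\<forall>x\<in>{x\<in>A. i \<in> D x}. \<forall>y\<in>{x\<in>A. i \<in> D x}. x = y"
    proof (intro ballI)
      fix x y assume "x \<in> {x\<in>A. i \<in> D x}" "y \<in> {x\<in>A. i \<in> D x}"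
      then have "x \<in> A" "y \<in> A" "D x = {i}" "D y = {i}" using single Dx1 by auto
      then show "x = y" using Deq Acube by simp
    qed
    then show ?thesis unfolding m_def using finA card_le_Suc0_iff_eq[of "{x\<in>A. i \<in> D x}"] by auto
  qed
  have m01: "real (m i) = 0 \<or> real (m i) = 1" for i using m1[of i] by auto
  have msum: "(\<Sum>i\<in>UNIV. m i) = card A"
  proof -
    have "(\<Sum>i\<in>UNIV. m i) = (\<Sum>i\<in>UNIV. \<Sum>x\<in>A. if i \<in> D x then 1 else 0)"
      unfolding m_def using finA by (simp add: sum.If_cases Int_def conj_commute)
    also have "\<dots> = (\<Sum>x\<in>A. \<Sum>i\<in>UNIV. if i \<in> D x then 1 else 0)" by (rule sum.swap)
    also have "\<dots> = (\<Sum>x\<in>A. card (D x))" by (simp add: sum.If_cases)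
    also have "\<dots> = (\<Sum>x\<in>A. 1)" using Dx1 by simp
    finally show ?thesis by simp
  qed
  have cent: "centroid A $ i - c$i = s i * m i / l" for i
  proof -
    have "(\<Sum>x\<in>A. x$i) - l * c$i = (\<Sum>x\<in>A. x$i - c$i)"
      unfolding l_def by (simp add: sum_subtractf)
    also have "\<dots> = (\<Sum>x\<in>A. if i \<in> D x then s i else 0)"
      using F1 Acube by (intro sum.cong) auto
    also have "\<dots> = s i * m i" unfolding m_def using finA by (simp add: sum.If_cases Int_def conj_commute)
    finally have "(\<Sum>x\<in>A. x$i) = l * c$i + s i * m i" by simp
    then show ?thesis using l3 unfolding centroid_def l_def[symmetric]
      by (simp add: field_simps)
  qed
  define d where "d b i = (if i \<in> D b then 1 else 0::real)" for b i
  have key: "(dist (centroid A) b)^2 = 1/l - 2 * (\<Sum>i\<in>D b. real (m i)) / l + card (D b)"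
    if "b \<in> cube" for b
  proof -
    have "(centroid A $ i - b$i)^2 = real (m i) / l^2 - 2 * (real (m i) * d b i) / l + d b i" for i
    proof -
      have "centroid A $ i - b$i = s i * (m i / l - d b i)"
        using cent[of i] F1[OF that, of i] unfolding d_def by (auto simp: field_simps)
      then have "(centroid A $ i - b$i)^2 = (m i / l - d b i)^2"
        using s2[of i] by (simp add: power_mult_distrib)
      also have "\<dots> = real (m i) / l^2 - 2 * (real (m i) * d b i) / l + d b i"
        using m01[of i] l3 unfolding d_def by (auto simp: power2_eq_square field_simps)
      finally show ?thesis .
    qed
    then have "(dist (centroid A) b)^2 = (\<Sum>i\<in>UNIV. real (m i) / l^2 - 2 * (real (m i) * d b i) / l + d b i)"
      by (simp add: dist_sq_vec)
    also have "\<dots> = (\<Sum>i\<in>UNIV. real (m i)) / l^2 - 2 * (\<Sum>i\<in>UNIV. real (m i) * d b i) / l + (\<Sum>i\<in>UNIV. d b i)"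
      by (simp add: sum.distrib sum_subtractf sum_divide_distrib sum_distrib_left)
    also have "(\<Sum>i\<in>UNIV. real (m i)) = l" using msum unfolding l_def by (simp flip: of_nat_sum)
    also have "(\<Sum>i\<in>UNIV. real (m i) * d b i) = (\<Sum>i\<in>D b. real (m i))"
    proof -
      have "(\<Sum>i\<in>UNIV. real (m i) * d b i) = (\<Sum>i\<in>UNIV. if i \<in> D b then real (m i) else 0)"
        unfolding d_def by (intro sum.cong) auto
      then show ?thesis by (simp add: sum.If_cases)
    qed
    also have "(\<Sum>i\<in>UNIV. d b i) = card (D b)"
      unfolding d_def by (simp add: sum.If_cases)
    finally show ?thesis using l3 by (simp add: power2_eq_square)
  qed
  show ?thesis
  proof (intro conjI ballI)
    fix a assume aA: "a \<in> A"
    obtain j where j: "D a = {j}" using Dx1[OF aA] card_1_singletonE by blast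
    have "m j \<ge> 1" unfolding m_def using finA aA j
      by (auto intro!: Suc_leI simp: card_gt_0_iff) blast
    then have "m j = 1" using m1[of j] by simp
    then have "(dist (centroid A) a)^2 = 1 - 1/l" using key[OF Acube[OF aA]] j by simp
    also have "\<dots> < 1" using l3 by simp
    finally have "(dist (centroid A) a)^2 < 1^2" by simp
    then show "dist (centroid A) a < 1" by (rule power_less_imp_less_base) simp
  next
    fix b assume b: "b \<in> cube - (A \<union> {c})"
    then have bc: "b \<in> cube" "b \<notin> A" "b \<noteq> c" by auto
    have "D b \<noteq> {}"
    proof
      assume "D b = {}"
      then have "D b = D c" unfolding D_def by simp
      then show False using Deq bc assms(1) by blast
    qed
    then have cD: "card (D b) \<ge> 1" by (simp add: Suc_leI card_gt_0_iff)
    have Kle: "(\<Sum>i\<in>D b. real (m i)) \<le> card (D b)"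
      using sum_mono[of "D b" "\<lambda>i. real (m i)" "\<lambda>i. 1"] m1 by simp
    have "(dist (centroid A) b)^2 \<ge> 1"
    proof (cases "card (D b) = 1")
      case True
      then obtain j where j: "D b = {j}" using card_1_singletonE by blast
      have "m j = 0"
      proof (rule ccontr)
        assume "m j \<noteq> 0"
        then have "{x\<in>A. j \<in> D x} \<noteq> {}" unfolding m_def by (metis card.empty)
        then obtain x where xA: "x \<in> A" "j \<in> D x" by blast
        then have "D x = D b" using single[of x j] Dx1[OF xA(1)] j by simp
        then have "x = b" using Deq Acube[OF xA(1)] bc(1) by blast
        then show False using xA bc by simp
      qed
      then show ?thesis using key[OF bc(1)] j l3 by simp
    next
      case False
      then have c2: "real (card (D b)) \<ge> 2" using cD by simp
      have "l * 1 \<le> 1 - 2 * (\<Sum>i\<in>D b. real (m i)) + l * card (D b)"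
      proof -
        have "(real (card (D b)) - 1) * (l - 2) \<ge> 1 * 1"
          using c2 l3 by (intro mult_mono) auto
        moreover have "(real (card (D b)) - 1) * (l - 2) = l * real (card (D b)) - 2 * real (card (D b)) - l + 2"
          by (simp add: algebra_simps)
        ultimately show ?thesis using Kle by linarith
      qed
      moreover have "l * (dist (centroid A) b)^2 + 2 * (\<Sum>i\<in>D b. real (m i)) = 1 + l * real (card (D b))"
        using key[OF bc(1)] l3 by (simp add: field_simps)
      ultimately have "l * 1 \<le> l * (dist (centroid A) b)^2" by linarith
      then show ?thesis using l3 by simp
    qed
    then have "1^2 \<le> (dist (centroid A) b)^2" by simp
    then show "dist (centroid A) b \<ge> 1" by (rule power2_le_imp_le) simp
  qed
qed

end
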